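(* Let $\sigma$ be a partial action of a locally compact Hausdorff group $G$ on a locally compact Hausdorff space $X$, and let $\sigma^e$ be its enveloping action on the enveloping space $X^e$. The following are equivalent: (1) $X^e$ is locally compact Hausdorff and $\sigma^e$ is a proper action; (2) for every net $\{(t_i,x_i)\}_{i\in I}\subseteq\Gamma_\sigma$ such that $\{(\sigma_{t_i}(x_i),x_i)\}_{i\in I}$ converges to a point of $X\times X$, there is a subnet of $\{(t_i,x_i)\}_{i\in I}$ converging to a point of $\Gamma_\sigma$; (3) the map $F_\sigma\colon\Gamma_\sigma\to X\times X$, $F_\sigma(t,x)=(\sigma_t(x),x)$, is proper.
   Context: A topological partial action $\sigma=(\{X_t\},\{\sigma_t\})$: open $X_t\subseteq X$, homeomorphisms $\sigma_t\colon X_{t^{-1}}\to X_t$, $X_e=X$, $\sigma_e=\mathrm{id}$, $\sigma_s(X_{s^{-1}}\cap X_t)=X_s\cap X_{st}$, $\sigma_s\sigma_t=\sigma_{st}$ on $X_{t^{-1}}\cap X_{t^{-1}s^{-1}}$, with $\Gamma_\sigma:=\{(t,x)\in G\times X:x\in X_{t^{-1}}\}$ open and $(t,x)\mapsto\sigma_t(x)$ continuous on it. The enveloping action $\sigma^e$ is (up to isomorphism) a global action of $G$ on a topological space $X^e$ with $X$ open in $X^e$, $X_t=X\cap\sigma^e_t(X)$, $\sigma_t=\sigma^e_t$ on $X_{t^{-1}}$, and $X^e=\bigcup_t\sigma^e_t(X)$. A global action $\sigma^e$ is proper if $(t,x)\mapsto(\sigma^e_t(x),x)$, $G\times X^e\to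 X^e\times X^e$, is proper (preimages of compact sets compact). *)

theory Defs
  imports "HOL-Analysis.Analysis" "HOL-Algebra.Group"
begin

definition topological_group :: "('g,'b) monoid_scheme \<Rightarrow> 'g topology \<Rightarrow> bool" where
  "topological_group G TG \<longleftrightarrow> group G \<and> topspace TG = carrier G \<and>
     continuous_map (prod_topology TG TG) TG (\<lambda>(s,t). s \<otimes>\<^bsub>G\<^esub> t) \<and>
     continuous_map TG TG (\<lambda>t. inv\<^bsub>G\<^esub> t)"

definition Gamma_pa :: "('g,'b) monoid_scheme \<Rightarrow> ('g \<Rightarrow> 'x set) \<Rightarrow> ('g \<times> 'x) set" where
  "Gamma_pa G D = {(t,x). t \<in> carrier G \<and> x \<in> D (inv\<^bsub>G\<^esub> t)}"

text \<open>Topological partial action (D t = X_t, \<sigma> t = \<sigma>_t : X_(t^-1) \<rightarrow> X_t).\<close>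
definition partial_action ::
  "('g,'b) monoid_scheme \<Rightarrow> 'g topology \<Rightarrow> 'x topology \<Rightarrow> ('g \<Rightarrow> 'x set) \<Rightarrow> ('g \<Rightarrow> 'x \<Rightarrow> 'x) \<Rightarrow> bool" where
  "partial_action G TG TX D \<sigma> \<longleftrightarrow>
     (\<forall>t\<in>carrier G. openin TX (D t)) \<and>
     (\<forall>t\<in>carrier G. homeomorphic_map (subtopology TX (D (inv\<^bsub>G\<^esub> t))) (subtopology TX (D t)) (\<sigma> t)) \<and>
     D \<one>\<^bsub>G\<^esub> = topspace TX \<and>
     (\<forall>x\<in>topspace TX. \<sigma> \<one>\<^bsub>G\<^esub> x = x) \<and>
     (\<forall>s\<in>carrier G. \<forall>t\<in>carrier G.
        \<sigma> s ` (D (inv\<^bsub>G\<^esub> s) \<inter> D t) = D s \<inter> D (s \<otimes>\<^bsub>G\<^esub> t)) \<and>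
     (\<forall>s\<in>carrier G. \<forall>t\<in>carrier G.
        \<forall>x\<in>D (inv\<^bsub>G\<^esub> t) \<inter> D (inv\<^bsub>G\<^esub> t \<otimes>\<^bsub>G\<^esub> inv\<^bsub>G\<^esub> s).
          \<sigma> s (\<sigma> t x) = \<sigma> (s \<otimes>\<^bsub>G\<^esub> t) x) \<and>
     openin (prod_topology TG TX) (Gamma_pa G D) \<and>
     continuous_map (subtopology (prod_topology TG TX) (Gamma_pa G D)) TX (\<lambda>(t,x). \<sigma> t x)"

definition global_action ::
  "('g,'b) monoid_scheme \<Rightarrow> 'g topology \<Rightarrow> 'e topology \<Rightarrow> ('g \<Rightarrow> 'e \<Rightarrow> 'e) \<Rightarrow> bool" where
  "global_action G TG TE \<beta> \<longleftrightarrow>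
     (\<forall>t\<in>carrier G. \<forall>y\<in>topspace TE. \<beta> t y \<in> topspace TE) \<and>
     (\<forall>y\<in>topspace TE. \<beta> \<one>\<^bsub>G\<^esub> y = y) \<and>
     (\<forall>s\<in>carrier G. \<forall>t\<in>carrier G. \<forall>y\<in>topspace TE. \<beta> s (\<beta> t y) = \<beta> (s \<otimes>\<^bsub>G\<^esub> t) y) \<and>
     continuous_map (prod_topology TG TE) TE (\<lambda>(t,y). \<beta> t y)"

text \<open>These data determine the enveloping
  action up to isomorphism.\<close>
definition enveloping_action ::
  "('g,'b) monoid_scheme \<Rightarrow> 'g topology \<Rightarrow> 'x topology \<Rightarrow> ('g \<Rightarrow> 'x set) \<Rightarrow> ('g \<Rightarrow> 'x \<Rightarrow> 'x)
    \<Rightarrow> 'e topology \<Rightarrow> ('g \<Rightarrow> 'e \<Rightarrow> 'e) \<Rightarrow> ('x \<Rightarrow> 'e) \<Rightarrow> bool" where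
  "enveloping_action G TG TX D \<sigma> TE \<beta> \<iota> \<longleftrightarrow>
     global_action G TG TE \<beta> \<and>
     embedding_map TX TE \<iota> \<and> openin TE (\<iota> ` topspace TX) \<and>
     (\<forall>t\<in>carrier G. \<iota> ` D t = \<iota> ` topspace TX \<inter> \<beta> t ` (\<iota> ` topspace TX)) \<and>
     (\<forall>t\<in>carrier G. \<forall>x\<in>D (inv\<^bsub>G\<^esub> t). \<iota> (\<sigma> t x) = \<beta> t (\<iota> x)) \<and>
     topspace TE = (\<Union>t\<in>carrier G. \<beta> t ` (\<iota> ` topspace TX))"

text \<open>Proper map in the sense of the paper: preimages of compact sets are compact.\<close>
definition compact_preimage_map :: "'a topology \<Rightarrow> 'b topology \<Rightarrow> ('a \<Rightarrow> 'b) \<Rightarrow> bool" where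
  "compact_preimage_map S T f \<longleftrightarrow>
     (\<forall>K. compactin T K \<longrightarrow> compactin S {z \<in> topspace S. f z \<in> K})"

definition proper_action ::
  "('g,'b) monoid_scheme \<Rightarrow> 'g topology \<Rightarrow> 'e topology \<Rightarrow> ('g \<Rightarrow> 'e \<Rightarrow> 'e) \<Rightarrow> bool" where
  "proper_action G TG TE \<beta> \<longleftrightarrow>
     compact_preimage_map (prod_topology TG TE) (prod_topology TE TE) (\<lambda>(t,y). (\<beta> t y, y))"

end

theory Submission
  imports Defs
begin


lemma compactin_filter_cluster:
  assumes "compactin X C" "F \<noteq> bot" "eventually (\<lambda>x. x \<in> C) F"
  shows "\<exists>x\<in>C. inf (nhdsin X x) F \<noteq> bot"
proof -
  define Z where "Z = (\<lambda>A. X closure_of A) ` {A. eventually (\<lambda>x. x \<in> A) F}"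
  have clo: "\<forall>z\<in>Z. closedin X z" unfolding Z_def by auto
  have Ct: "C \<subseteq> topspace X" using compactin_subset_topspace[OF assms(1)] .
  have ev_Z: "\<And>z. z \<in> Z \<Longrightarrow> eventually (\<lambda>x. x \<in> C \<longrightarrow> x \<in> z) F"
    unfolding Z_def using Ct
    by (auto elim!: eventually_mono simp: in_closure_of)
  have "\<forall>B. finite B \<and> B \<subseteq> Z \<longrightarrow> C \<inter> \<Inter>B \<noteq> {}"
  proof (intro allI impI)
    fix B assume B: "finite B \<and> B \<subseteq> Z"
    with ev_Z have "eventually (\<lambda>x. \<forall>z\<in>B. x \<in> C \<longrightarrow> x \<in> z) F"
      by (intro eventually_ball_finite) auto
    with assms(3) have "eventually (\<lambda>x. x \<in> C \<inter> \<Inter>B) F"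
      by (rule eventually_elim2) auto
    with assms(2) show "C \<inter> \<Inter>B \<noteq> {}"
      by (intro notI) (simp add: eventually_False)
  qed
  then have "C \<inter> \<Inter>Z \<noteq> {}"
    using assms(1) clo unfolding compactin_fip by blast
  then obtain x where x: "x \<in> C" "\<And>z. z \<in> Z \<Longrightarrow> x \<in> z" by auto
  have xt: "x \<in> topspace X" using x(1) compactin_subset_topspace[OF assms(1)] by auto
  have "inf (nhdsin X x) F \<noteq> bot"
  proof
    assume "inf (nhdsin X x) F = bot"
    then have "eventually (\<lambda>_. False) (inf (nhdsin X x) F)" by simp
    then obtain Q R where Q: "eventually Q (nhdsin X x)" and R: "eventually R F"
      and QR: "\<forall>y. Q y \<and> R y \<longrightarrow> False"
      unfolding eventually_inf by blast
    from Q xt obtain S where S: "openin X S" "x \<in> S" "\<forall>y\<in>S. Q y"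
      unfolding eventually_nhdsin by blast
    have "X closure_of {y. R y} \<in> Z" unfolding Z_def using R by auto
    then have "x \<in> X closure_of {y. R y}" by (rule x(2))
    then obtain y where "y \<in> {y. R y}" "y \<in> S"
      using S unfolding in_closure_of by blast
    then show False using QR S by auto
  qed
  then show ?thesis using x(1) by blast
qed

lemma compactin_filter_intro:
  assumes "C \<subseteq> topspace X"
    and H: "\<And>F. F \<noteq> bot \<Longrightarrow> eventually (\<lambda>x. x \<in> C) F \<Longrightarrow> \<exists>x\<in>C. inf (nhdsin X x) F \<noteq> bot"
  shows "compactin X C"
  unfolding compactin_fip
proof (intro conjI assms allI impI)
  fix A assume A: "(\<forall>C\<in>A. closedin X C) \<and> (\<forall>B. finite B \<and> B \<subseteq> A \<longrightarrow> C \<inter> \<Inter>B \<noteq> {})"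
  define F where "F = (INF a\<in>insert C A. principal a)"
  have "F \<noteq> bot"
    unfolding F_def
  proof (rule INF_filter_not_bot)
    fix B
    assume B: "B \<subseteq> insert C A" "finite B"
    with A have "C \<inter> \<Inter>(B - {C}) \<noteq> {}"
      by auto
    with B show "(INF a\<in>B. principal a) \<noteq> bot"
      by (auto simp: INF_principal_finite principal_eq_bot_iff)
  qed
  moreover have "F \<le> principal C"
    unfolding F_def by auto
  then have "eventually (\<lambda>x. x \<in> C) F"
    by (auto simp: le_filter_def eventually_principal)
  ultimately obtain x where x: "x \<in> C" "inf (nhdsin X x) F \<noteq> bot"
    using H by blast
  have xt: "x \<in> topspace X" using x assms(1) by auto
  have "x \<in> V" if "V \<in> A" for V
  proof (rule ccontr)
    assume nV: "x \<notin> V"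
    have "F \<le> principal V"
      using that by (metis INF_lower F_def insertCI)
    then have V: "eventually (\<lambda>x. x \<in> V) F"
      by (auto simp: le_filter_def eventually_principal)
    have "openin X (topspace X - V)" using A that by auto
    then have "eventually (\<lambda>y. y \<in> topspace X - V) (nhdsin X x)"
      using nV xt unfolding eventually_nhdsin by blast
    then have "eventually (\<lambda>_. False) (inf (nhdsin X x) F)"
      using V unfolding eventually_inf by blast
    then show False using x(2) by (simp add: eventually_False)
  qed
  then show "C \<inter> \<Inter>A \<noteq> {}" using x by blast
qed


lemma limitin_mono_filter:
  assumes "limitin X f l F" "F' \<le> F" shows "limitin X f l F'"
  using assms unfolding limitin_def by (auto intro: filter_leD)

lemma limitin_id_le_nhdsin:
  assumes "limitin X (\<lambda>z. z) q F" shows "F \<le> nhdsin X q"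
  unfolding le_filter_def eventually_nhdsin
  using assms unfolding limitin_def by (auto elim!: eventually_mono)

lemma proper_imp_netprop:
  assumes T: "locally_compact_space T" and P: "compact_preimage_map S T f"
   and F: "F \<noteq> bot" "eventually (\<lambda>z. z \<in> topspace S) F" and L: "limitin T f p F"
  shows "\<exists>F'. F' \<noteq> bot \<and> F' \<le> F \<and> (\<exists>q. limitin S (\<lambda>z. z) q F')"
proof -
  have "p \<in> topspace T" using L by (rule limitin_topspace)
  then obtain U K where UK: "openin T U" "compactin T K" "p \<in> U" "U \<subseteq> K"
    using T unfolding locally_compact_space_def by blast
  have "eventually (\<lambda>z. f z \<in> U) F" using L UK by (simp add: limitinD)
  with F(2) have ev: "eventually (\<lambda>z. z \<in> {z \<in> topspace S. f z \<in> K}) F"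
    by (rule eventually_elim2) (use UK in auto)
  have "compactin S {z \<in> topspace S. f z \<in> K}" using P UK unfolding compact_preimage_map_def by blast
  from compactin_filter_cluster[OF this F(1) ev] obtain q where
    q: "q \<in> topspace S" "inf (nhdsin S q) F \<noteq> bot" by auto
  have "limitin S (\<lambda>z. z) q (inf (nhdsin S q) F)"
    unfolding limitin_def
  proof (intro conjI allI impI)
    show "q \<in> topspace S" by (rule q(1))
  next
    fix U assume "openin S U \<and> q \<in> U"
    then have "eventually (\<lambda>z. z \<in> U) (nhdsin S q)" unfolding eventually_nhdsin by blast
    then show "eventually (\<lambda>z. z \<in> U) (inf (nhdsin S q) F)" by (rule filter_leD[OF inf_le1])
  qed
  then show ?thesis using q(2) by (intro exI[of _ "inf (nhdsin S q) F"]) auto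
qed

lemma netprop_imp_proper:
  assumes T: "Hausdorff_space T" and C: "continuous_map S T f"
   and H: "\<And>F. F \<noteq> bot \<Longrightarrow> eventually (\<lambda>z. z \<in> topspace S) F \<Longrightarrow> (\<exists>p. limitin T f p F)
           \<Longrightarrow> \<exists>F'. F' \<noteq> bot \<and> F' \<le> F \<and> (\<exists>q. limitin S (\<lambda>z. z) q F')"
  shows "compact_preimage_map S T f"
  unfolding compact_preimage_map_def
proof (intro allI impI)
  fix K assume K: "compactin T K"
  show "compactin S {z \<in> topspace S. f z \<in> K}"
  proof (rule compactin_filter_intro)
    fix F assume F: "F \<noteq> bot" "eventually (\<lambda>x. x \<in> {z \<in> topspace S. f z \<in> K}) F"
    have "filtermap f F \<noteq> bot" using F by (simp add: filtermap_bot_iff)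
    moreover have "eventually (\<lambda>y. y \<in> K) (filtermap f F)"
      using F(2) by (auto simp: eventually_filtermap elim!: eventually_mono)
    ultimately obtain p where p: "p \<in> K" "inf (nhdsin T p) (filtermap f F) \<noteq> bot"
      using compactin_filter_cluster[OF K] by blast
    have pT: "p \<in> topspace T" using p K compactin_subset_topspace by blast
    define F1 where "F1 = inf F (filtercomap f (nhdsin T p))"
    have F1: "F1 \<noteq> bot"
    proof
      assume "F1 = bot"
      then have "eventually (\<lambda>_. False) F1" by simp
      then obtain R Q0 where R: "eventually R F" and Q0: "eventually Q0 (filtercomap f (nhdsin T p))"
        and RQ0: "\<forall>z. R z \<and> Q0 z \<longrightarrow> False"
        unfolding F1_def eventually_inf by blast
      from Q0 obtain Q where Q: "eventually Q (nhdsin T p)" and QQ: "\<forall>x. Q (f x) \<longrightarrow> Q0 x"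
        unfolding eventually_filtercomap by blast
      have RQ: "\<forall>z. R z \<and> Q (f z) \<longrightarrow> False" using RQ0 QQ by blast
      have "eventually (\<lambda>y. \<not> Q y) (filtermap f F)"
        using R RQ by (auto simp: eventually_filtermap elim!: eventually_mono)
      then have "eventually (\<lambda>_. False) (inf (nhdsin T p) (filtermap f F))"
        using Q unfolding eventually_inf by blast
      then show False using p(2) by (simp add: eventually_False)
    qed
    have LF1: "limitin T f p F1"
      unfolding limitin_def F1_def
    proof (intro conjI allI impI)
      show "p \<in> topspace T" by (rule pT)
    next
      fix U assume "openin T U \<and> p \<in> U"
      then have "eventually (\<lambda>z. z \<in> U) (nhdsin T p)" unfolding eventually_nhdsin by blast
      then have "eventually (\<lambda>z. f z \<in> U) (filtercomap f (nhdsin T p))"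
        by (rule eventually_filtercomapI)
      then show "eventually (\<lambda>z. f z \<in> U) (inf F (filtercomap f (nhdsin T p)))"
        by (rule filter_leD[OF inf_le2])
    qed
    have evF1: "eventually (\<lambda>z. z \<in> topspace S) F1"
      unfolding F1_def by (rule filter_leD[OF inf_le1]) (use F(2) in \<open>auto elim: eventually_mono\<close>)
    obtain F' q where F': "F' \<noteq> bot" "F' \<le> F1" "limitin S (\<lambda>z. z) q F'"
      using H[OF F1 evF1] LF1 by blast
    have "limitin T (f \<circ> (\<lambda>z. z)) (f q) F'" by (rule continuous_map_limit[OF C F'(3)])
    then have l1: "limitin T f (f q) F'" by (simp add: o_def)
    have l2: "limitin T f p F'" using LF1 F'(2) by (rule limitin_mono_filter)
    have "f q = p" using limitin_Hausdorff_unique[OF l1 l2 _ T] F'(1) by simp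
    moreover have qS: "q \<in> topspace S" using F'(3) by (rule limitin_topspace)
    ultimately have "q \<in> {z \<in> topspace S. f z \<in> K}" using p by auto
    moreover have "inf (nhdsin S q) F \<noteq> bot"
    proof
      assume "inf (nhdsin S q) F = bot"
      moreover have "F' \<le> inf (nhdsin S q) F"
        using limitin_id_le_nhdsin[OF F'(3)] F'(2) unfolding F1_def
        by (metis inf.bounded_iff)
      ultimately show False using F'(1) by (simp add: bot_unique)
    qed
    ultimately show "\<exists>x\<in>{z \<in> topspace S. f z \<in> K}. inf (nhdsin S x) F \<noteq> bot" by blast
  qed auto
qed




locale pa_env =
  fixes G :: "('g,'b) monoid_scheme" and TG :: "'g topology"
    and TX :: "'x topology" and D :: "'g \<Rightarrow> 'x set" and \<sigma> :: "'g \<Rightarrow> 'x \<Rightarrow> 'x"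
    and TE :: "'e topology" and \<beta> :: "'g \<Rightarrow> 'e \<Rightarrow> 'e" and \<iota> :: "'x \<Rightarrow> 'e"
  assumes tg: "topological_group G TG" and lcG: "locally_compact_space TG" and hG: "Hausdorff_space TG"
    and lcX: "locally_compact_space TX" and hX: "Hausdorff_space TX"
    and pa: "partial_action G TG TX D \<sigma>"
    and ea: "enveloping_action G TG TX D \<sigma> TE \<beta> \<iota>"
begin

sublocale grp: group G using tg unfolding topological_group_def by blast

lemma tsG: "topspace TG = carrier G" using tg unfolding topological_group_def by blast

lemma mult_cont: "continuous_map (prod_topology TG TG) TG (\<lambda>(s,t). s \<otimes>\<^bsub>G\<^esub> t)"
  using tg unfolding topological_group_def by blast

lemma Dopen: "t \<in> carrier G \<Longrightarrow> openin TX (D t)"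
  using pa unfolding partial_action_def by blast

lemma D_sub: "t \<in> carrier G \<Longrightarrow> D t \<subseteq> topspace TX"
  using Dopen openin_subset by blast

abbreviation "\<Gamma> \<equiv> Gamma_pa G D"
abbreviation "\<Gamma>T \<equiv> subtopology (prod_topology TG TX) (Gamma_pa G D)"

lemma Gamma_sub: "\<Gamma> \<subseteq> topspace (prod_topology TG TX)"
  using D_sub tsG unfolding Gamma_pa_def by auto

lemma ts_Gamma: "topspace \<Gamma>T = \<Gamma>"
  using Gamma_sub by auto

lemma sigma_cont: "continuous_map \<Gamma>T TX (\<lambda>(t,x). \<sigma> t x)"
  using pa unfolding partial_action_def by blast

lemma sigma_in: "(t,x) \<in> \<Gamma> \<Longrightarrow> \<sigma> t x \<in> topspace TX"
proof -
  assume "(t,x) \<in> \<Gamma>"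
  then have "(\<lambda>(t,x). \<sigma> t x) (t,x) \<in> topspace TX"
    using continuous_map_image_subset_topspace[OF sigma_cont] ts_Gamma by blast
  then show ?thesis by simp
qed

lemma f_cont: "continuous_map \<Gamma>T (prod_topology TX TX) (\<lambda>(t,x). (\<sigma> t x, x))"
proof -
  have "continuous_map \<Gamma>T TX snd"
    by (rule continuous_map_from_subtopology[OF continuous_map_snd])
  then have "continuous_map \<Gamma>T (prod_topology TX TX) (\<lambda>z. ((\<lambda>(t,x). \<sigma> t x) z, snd z))"
    using sigma_cont by (intro continuous_map_pairedI)
  then show ?thesis by (simp add: case_prod_beta')
qed

lemma ga: "global_action G TG TE \<beta>" using ea unfolding enveloping_action_def by blast

lemma beta_in: "t \<in> carrier G \<Longrightarrow> e \<in> topspace TE \<Longrightarrow> \<beta> t e \<in> topspace TE"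
  using ga unfolding global_action_def by blast

lemma beta_one: "e \<in> topspace TE \<Longrightarrow> \<beta> \<one>\<^bsub>G\<^esub> e = e"
  using ga unfolding global_action_def by blast

lemma beta_comp: "s \<in> carrier G \<Longrightarrow> t \<in> carrier G \<Longrightarrow> e \<in> topspace TE \<Longrightarrow> \<beta> s (\<beta> t e) = \<beta> (s \<otimes>\<^bsub>G\<^esub> t) e"
  using ga unfolding global_action_def by blast

lemma beta_jcont: "continuous_map (prod_topology TG TE) TE (\<lambda>(t,y). \<beta> t y)"
  using ga unfolding global_action_def by blast

lemma beta_cont: "t \<in> carrier G \<Longrightarrow> continuous_map TE TE (\<beta> t)"
proof -
  assume t: "t \<in> carrier G"
  have "continuous_map TE (prod_topology TG TE) (\<lambda>y. (t, y))"
    using t tsG by (intro continuous_map_pairedI) (auto simp: continuous_map_id)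
  from continuous_map_compose[OF this beta_jcont] show ?thesis by (simp add: o_def)
qed

lemma beta_inv: "t \<in> carrier G \<Longrightarrow> e \<in> topspace TE \<Longrightarrow> \<beta> (inv\<^bsub>G\<^esub> t) (\<beta> t e) = e"
  by (simp add: beta_comp beta_one)

lemma beta_inv2: "t \<in> carrier G \<Longrightarrow> e \<in> topspace TE \<Longrightarrow> \<beta> t (\<beta> (inv\<^bsub>G\<^esub> t) e) = e"
  by (simp add: beta_comp beta_one)

lemma emb: "embedding_map TX TE \<iota>" using ea unfolding enveloping_action_def by (elim conjE) assumption

lemma openIX: "openin TE (\<iota> ` topspace TX)" using ea unfolding enveloping_action_def by (elim conjE) assumption

lemma iota_D: "t \<in> carrier G \<Longrightarrow> \<iota> ` D t = \<iota> ` topspace TX \<inter> \<beta> t ` (\<iota> ` topspace TX)"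
proof -
  assume t: "t \<in> carrier G"
  have "\<forall>t\<in>carrier G. \<iota> ` D t = \<iota> ` topspace TX \<inter> \<beta> t ` (\<iota> ` topspace TX)"
    using ea unfolding enveloping_action_def by (elim conjE) assumption
  from this t show ?thesis by (rule bspec)
qed

lemma iota_sigma: "t \<in> carrier G \<Longrightarrow> x \<in> D (inv\<^bsub>G\<^esub> t) \<Longrightarrow> \<iota> (\<sigma> t x) = \<beta> t (\<iota> x)"
proof -
  assume t: "t \<in> carrier G" and x: "x \<in> D (inv\<^bsub>G\<^esub> t)"
  have "\<forall>t\<in>carrier G. \<forall>x\<in>D (inv\<^bsub>G\<^esub> t). \<iota> (\<sigma> t x) = \<beta> t (\<iota> x)"
    using ea unfolding enveloping_action_def by (elim conjE) assumption
  then show ?thesis using t x by simp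
qed

lemma TE_cover: "topspace TE = (\<Union>t\<in>carrier G. \<beta> t ` (\<iota> ` topspace TX))"
  using ea unfolding enveloping_action_def by (elim conjE) assumption

lemma iota_inj: "inj_on \<iota> (topspace TX)"
  using emb unfolding embedding_map_def homeomorphic_map_def by blast

lemma iota_cont: "continuous_map TX TE \<iota>"
proof -
  have "continuous_map TX (subtopology TE (\<iota> ` topspace TX)) \<iota>"
    using emb unfolding embedding_map_def by (rule homeomorphic_imp_continuous_map)
  then show ?thesis by (simp add: continuous_map_in_subtopology)
qed

lemma iota_in: "x \<in> topspace TX \<Longrightarrow> \<iota> x \<in> topspace TE"
  using openIX openin_subset by blast

lemma iota_open: "openin TX A \<Longrightarrow> openin TE (\<iota> ` A)"
proof -
  assume A: "openin TX A"
  have "open_map TX (subtopology TE (\<iota> ` topspace TX)) \<iota>"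
    using emb unfolding embedding_map_def by (rule homeomorphic_imp_open_map)
  then have "openin (subtopology TE (\<iota> ` topspace TX)) (\<iota> ` A)"
    using A unfolding open_map_def by blast
  then show ?thesis using openIX openin_trans_full by blast
qed

definition "gi = inv_into (topspace TX) \<iota>"

lemma gi_iota: "x \<in> topspace TX \<Longrightarrow> gi (\<iota> x) = x"
  unfolding gi_def using iota_inj by simp

lemma iota_gi: "e \<in> \<iota> ` topspace TX \<Longrightarrow> \<iota> (gi e) = e \<and> gi e \<in> topspace TX"
  unfolding gi_def by (auto simp: f_inv_into_f inv_into_into)

lemma gi_cont: "continuous_map (subtopology TE (\<iota> ` topspace TX)) TX gi"
proof -
  obtain g where g: "homeomorphic_maps TX (subtopology TE (\<iota> ` topspace TX)) \<iota> g"
    using emb unfolding embedding_map_def homeomorphic_map_maps by blast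
  then have gc: "continuous_map (subtopology TE (\<iota> ` topspace TX)) TX g"
    unfolding homeomorphic_maps_def by blast
  have "g e = gi e" if "e \<in> topspace (subtopology TE (\<iota> ` topspace TX))" for e
  proof -
    from that obtain x where x: "x \<in> topspace TX" "e = \<iota> x" by auto
    have "\<forall>x\<in>topspace TX. g (\<iota> x) = x" using g unfolding homeomorphic_maps_def by (elim conjE)
    then have "g (\<iota> x) = x" using x(1) by blast
    then show ?thesis using x gi_iota by simp
  qed
  then show ?thesis using continuous_map_eq[OF gc] by blast
qed

lemma Gamma_iff: "(t,x) \<in> \<Gamma> \<longleftrightarrow> t \<in> carrier G \<and> x \<in> D (inv\<^bsub>G\<^esub> t)"
  unfolding Gamma_pa_def by simp

lemma key:
  assumes t: "t \<in> carrier G" and a: "a \<in> topspace TX" and b: "b \<in> topspace TX"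
    and eq: "\<beta> t (\<iota> b) = \<iota> a"
  shows "b \<in> D (inv\<^bsub>G\<^esub> t) \<and> \<sigma> t b = a"
proof -
  have ba: "\<beta> (inv\<^bsub>G\<^esub> t) (\<iota> a) = \<iota> b"
    using beta_inv[OF t iota_in[OF b]] eq by simp
  have "\<iota> b \<in> \<iota> ` topspace TX \<inter> \<beta> (inv\<^bsub>G\<^esub> t) ` (\<iota> ` topspace TX)"
  proof (rule IntI)
    show "\<iota> b \<in> \<iota> ` topspace TX" using b by (rule imageI)
    have "\<iota> a \<in> \<iota> ` topspace TX" using a by (rule imageI)
    then show "\<iota> b \<in> \<beta> (inv\<^bsub>G\<^esub> t) ` (\<iota> ` topspace TX)"
      using ba by (metis imageI)
  qed
  then have "\<iota> b \<in> \<iota> ` D (inv\<^bsub>G\<^esub> t)" using iota_D[of "inv\<^bsub>G\<^esub> t"] t by simp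
  then obtain d where d: "d \<in> D (inv\<^bsub>G\<^esub> t)" "\<iota> d = \<iota> b" by auto
  have "d \<in> topspace TX" using d(1) D_sub t by blast
  then have "d = b" using d(2) b iota_inj by (metis inj_onD)
  with d have bD: "b \<in> D (inv\<^bsub>G\<^esub> t)" by simp
  have "\<iota> (\<sigma> t b) = \<iota> a" using iota_sigma[OF t bD] eq by simp
  moreover have "(t,b) \<in> \<Gamma>" using t bD by (simp add: Gamma_iff)
  then have "\<sigma> t b \<in> topspace TX" by (rule sigma_in)
  ultimately have "\<sigma> t b = a" using a iota_inj by (metis inj_onD)
  with bD show ?thesis by simp
qed

lemma beta_pre_open: "s \<in> carrier G \<Longrightarrow> openin TE W \<Longrightarrow> openin TE {e \<in> topspace TE. \<beta> s e \<in> W}"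
  using openin_continuous_map_preimage[OF beta_cont] by blast

lemma beta_image_eq:
  assumes s: "s \<in> carrier G" and W: "W \<subseteq> topspace TE"
  shows "\<beta> s ` W = {e \<in> topspace TE. \<beta> (inv\<^bsub>G\<^esub> s) e \<in> W}"
proof
  show "\<beta> s ` W \<subseteq> {e \<in> topspace TE. \<beta> (inv\<^bsub>G\<^esub> s) e \<in> W}"
  proof
    fix e assume e: "e \<in> \<beta> s ` W"
    then obtain w where w: "w \<in> W" "e = \<beta> s w" by blast
    have wT: "w \<in> topspace TE" using w W by blast
    have "\<beta> (inv\<^bsub>G\<^esub> s) e = w" using w beta_inv[OF s wT] by simp
    then show "e \<in> {e \<in> topspace TE. \<beta> (inv\<^bsub>G\<^esub> s) e \<in> W}"
      using w beta_in[OF s wT] by simp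
  qed
next
  show "{e \<in> topspace TE. \<beta> (inv\<^bsub>G\<^esub> s) e \<in> W} \<subseteq> \<beta> s ` W"
  proof
    fix e assume e: "e \<in> {e \<in> topspace TE. \<beta> (inv\<^bsub>G\<^esub> s) e \<in> W}"
    then have "e = \<beta> s (\<beta> (inv\<^bsub>G\<^esub> s) e)" using beta_inv2 s by simp
    then show "e \<in> \<beta> s ` W" using e by blast
  qed
qed

lemma beta_image_open: "s \<in> carrier G \<Longrightarrow> openin TE W \<Longrightarrow> openin TE (\<beta> s ` W)"
proof -
  assume s: "s \<in> carrier G" and W: "openin TE W"
  then have "W \<subseteq> topspace TE" using openin_subset by blast
  then show ?thesis using beta_image_eq[OF s] beta_pre_open[OF _ W] s by simp
qed

lemma cover_pt: "e \<in> topspace TE \<Longrightarrow> \<exists>s\<in>carrier G. \<exists>x\<in>topspace TX. e = \<beta> s (\<iota> x)"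
proof -
  assume "e \<in> topspace TE"
  then have "e \<in> (\<Union>t\<in>carrier G. \<beta> t ` (\<iota> ` topspace TX))" using TE_cover by simp
  then show ?thesis by blast
qed

abbreviation "fmap \<equiv> (\<lambda>(t,x). (\<sigma> t x, x))"

abbreviation "NP \<equiv> (\<forall>F :: ('g \<times> 'x) filter.
             F \<noteq> bot \<and> eventually (\<lambda>z. z \<in> Gamma_pa G D) F \<and>
             (\<exists>p. limitin (prod_topology TX TX) (\<lambda>(t,x). (\<sigma> t x, x)) p F)
             \<longrightarrow> (\<exists>F'. F' \<noteq> bot \<and> F' \<le> F \<and>
                   (\<exists>q. limitin (subtopology (prod_topology TG TX) (Gamma_pa G D)) (\<lambda>z. z) q F')))"

lemma T23: "NP \<longleftrightarrow> compact_preimage_map \<Gamma>T (prod_topology TX TX) fmap"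
proof
  assume H: NP
  show "compact_preimage_map \<Gamma>T (prod_topology TX TX) fmap"
  proof (rule netprop_imp_proper[OF _ f_cont])
    show "Hausdorff_space (prod_topology TX TX)" using hX Hausdorff_space_prod_topology by blast
  next
    fix F :: "('g \<times> 'x) filter"
    assume A: "F \<noteq> bot" "eventually (\<lambda>z. z \<in> topspace \<Gamma>T) F" "\<exists>p. limitin (prod_topology TX TX) fmap p F"
    have "eventually (\<lambda>z. z \<in> \<Gamma>) F" using A(2) unfolding ts_Gamma .
    then have "F \<noteq> bot \<and> eventually (\<lambda>z. z \<in> \<Gamma>) F \<and> (\<exists>p. limitin (prod_topology TX TX) fmap p F)"
      using A(1,3) by simp
    then show "\<exists>F'. F' \<noteq> bot \<and> F' \<le> F \<and> (\<exists>q. limitin \<Gamma>T (\<lambda>z. z) q F')"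
      by (rule H[rule_format])
  qed
next
  assume P: "compact_preimage_map \<Gamma>T (prod_topology TX TX) fmap"
  have lc: "locally_compact_space (prod_topology TX TX)"
    using lcX locally_compact_space_prod_topology by blast
  show NP
  proof (intro allI impI)
    fix F :: "('g \<times> 'x) filter"
    assume A: "F \<noteq> bot \<and> eventually (\<lambda>z. z \<in> \<Gamma>) F \<and> (\<exists>p. limitin (prod_topology TX TX) fmap p F)"
    then obtain p where p: "limitin (prod_topology TX TX) fmap p F" by blast
    have ev: "eventually (\<lambda>z. z \<in> topspace \<Gamma>T) F" unfolding ts_Gamma using A by blast
    show "\<exists>F'. F' \<noteq> bot \<and> F' \<le> F \<and> (\<exists>q. limitin \<Gamma>T (\<lambda>z. z) q F')"
      using proper_imp_netprop[OF lc P _ ev p] A by blast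
  qed
qed

lemma T13:
  assumes PA: "proper_action G TG TE \<beta>"
  shows "compact_preimage_map \<Gamma>T (prod_topology TX TX) fmap"
  unfolding compact_preimage_map_def
proof (intro allI impI)
  fix K assume K: "compactin (prod_topology TX TX) K"
  define ii where "ii = (\<lambda>(a,b). (\<iota> a, \<iota> b))"
  have "continuous_map (prod_topology TX TX) (prod_topology TE TE) ii"
    unfolding ii_def using iota_cont by (simp add: continuous_map_prod_top)
  then have K': "compactin (prod_topology TE TE) (ii ` K)"
    using K image_compactin by blast
  define P where "P = {z \<in> topspace (prod_topology TG TE). (\<lambda>(t,y). (\<beta> t y, y)) z \<in> ii ` K}"
  have Pc: "compactin (prod_topology TG TE) P"
    using PA K' unfolding proper_action_def compact_preimage_map_def P_def by blast
  have Ksub: "K \<subseteq> topspace TX \<times> topspace TX"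
    using compactin_subset_topspace[OF K] by simp
  have Psub: "P \<subseteq> topspace TG \<times> \<iota> ` topspace TX"
  proof
    fix z assume z: "z \<in> P"
    obtain t e where te: "z = (t,e)" by (cases z)
    from z te have "t \<in> topspace TG" "(\<beta> t e, e) \<in> ii ` K" unfolding P_def by auto
    then obtain a b where "(a,b) \<in> K" "e = \<iota> b" unfolding ii_def by auto
    then show "z \<in> topspace TG \<times> \<iota> ` topspace TX" using te \<open>t \<in> topspace TG\<close> Ksub by auto
  qed
  have Pc2: "compactin (prod_topology TG (subtopology TE (\<iota> ` topspace TX))) P"
    using Pc Psub by (simp add: prod_topology_subtopology compactin_subtopology)
  define h where "h = (\<lambda>(t::'g,e). (t, gi e))"
  have "continuous_map (prod_topology TG (subtopology TE (\<iota> ` topspace TX))) (prod_topology TG TX) h"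
    unfolding h_def using gi_cont by (simp add: continuous_map_prod_top)
  then have hc: "compactin (prod_topology TG TX) (h ` P)"
    using Pc2 image_compactin by blast
  have eq: "h ` P = {z \<in> \<Gamma>. fmap z \<in> K}"
  proof
    show "h ` P \<subseteq> {z \<in> \<Gamma>. fmap z \<in> K}"
    proof
      fix z assume "z \<in> h ` P"
      then obtain t e where te: "(t,e) \<in> P" "z = (t, gi e)" unfolding h_def by auto
      from te(1) have tc: "t \<in> carrier G" and inK: "(\<beta> t e, e) \<in> ii ` K"
        unfolding P_def using tsG by auto
      from inK obtain a b where ab0: "(a,b) \<in> K" "(\<beta> t e, e) = (\<iota> a, \<iota> b)"
        unfolding ii_def by auto
      have ab: "(a,b) \<in> K" "\<beta> t e = \<iota> a" "e = \<iota> b" "t \<in> carrier G"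
        using ab0 tc by auto
      have abX: "a \<in> topspace TX" "b \<in> topspace TX" using ab Ksub by auto
      have "b \<in> D (inv\<^bsub>G\<^esub> t) \<and> \<sigma> t b = a" using key[OF ab(4) abX(1) abX(2)] ab by simp
      moreover have "gi e = b" using ab gi_iota abX by simp
      ultimately show "z \<in> {z \<in> \<Gamma>. fmap z \<in> K}" using te ab Gamma_iff by auto
    qed
  next
    show "{z \<in> \<Gamma>. fmap z \<in> K} \<subseteq> h ` P"
    proof
      fix z assume z: "z \<in> {z \<in> \<Gamma>. fmap z \<in> K}"
      then obtain t x where tx: "z = (t,x)" "t \<in> carrier G" "x \<in> D (inv\<^bsub>G\<^esub> t)" "(\<sigma> t x, x) \<in> K"
        using Gamma_iff by (cases z) auto
      have xX: "x \<in> topspace TX" using tx D_sub by blast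
      have "ii (\<sigma> t x, x) = (\<beta> t (\<iota> x), \<iota> x)"
        unfolding ii_def using iota_sigma[OF tx(2) tx(3)] by simp
      then have "(\<beta> t (\<iota> x), \<iota> x) \<in> ii ` K" using tx(4) by (metis image_eqI)
      moreover have "(t, \<iota> x) \<in> topspace (prod_topology TG TE)"
        using tx(2) xX iota_in tsG by simp
      ultimately have "(t, \<iota> x) \<in> P" unfolding P_def by simp
      moreover have "h (t, \<iota> x) = z" unfolding h_def using tx xX gi_iota by simp
      ultimately show "z \<in> h ` P" by force
    qed
  qed
  have "{z \<in> topspace \<Gamma>T. fmap z \<in> K} = h ` P" using eq ts_Gamma by simp
  then show "compactin \<Gamma>T {z \<in> topspace \<Gamma>T. fmap z \<in> K}"
    using hc eq by (simp add: compactin_subtopology)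
qed


lemma sep_core:
  assumes H: NP and x: "x \<in> topspace TX" and y: "y \<in> topspace TX" and r: "r \<in> carrier G"
    and ne: "\<iota> x \<noteq> \<beta> r (\<iota> y)"
  shows "\<exists>U V. openin TE U \<and> openin TE V \<and> \<iota> x \<in> U \<and> \<beta> r (\<iota> y) \<in> V \<and> disjnt U V"
proof (rule ccontr)
  assume nsep: "\<not> (\<exists>U V. openin TE U \<and> openin TE V \<and> \<iota> x \<in> U \<and> \<beta> r (\<iota> y) \<in> V \<and> disjnt U V)"
  define S0 where "S0 = {z \<in> \<Gamma>. fst z = r}"
  define F where "F = inf (principal S0) (filtercomap fmap (nhdsin (prod_topology TX TX) (x,y)))"
  have Fnb: "F \<noteq> bot"
  proof
    assume "F = bot"
    then have "eventually (\<lambda>_. False) F" by simp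
    then obtain P Q0 where P: "eventually P (principal S0)"
      and Q0: "eventually Q0 (filtercomap fmap (nhdsin (prod_topology TX TX) (x,y)))"
      and PQ: "\<forall>z. P z \<and> Q0 z \<longrightarrow> False"
      unfolding F_def eventually_inf by blast
    from Q0 obtain Q where Q: "eventually Q (nhdsin (prod_topology TX TX) (x,y))"
      and QQ: "\<forall>z. Q (fmap z) \<longrightarrow> Q0 z"
      unfolding eventually_filtercomap by blast
    have xyT: "(x,y) \<in> topspace (prod_topology TX TX)" using x y by simp
    from Q xyT obtain W where W: "openin (prod_topology TX TX) W" "(x,y) \<in> W" "\<forall>w\<in>W. Q w"
      unfolding eventually_nhdsin by blast
    have "\<exists>U V. openin TX U \<and> openin TX V \<and> x \<in> U \<and> y \<in> V \<and> U \<times> V \<subseteq> W"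
      using W(1) W(2) unfolding openin_prod_topology_alt by simp
    then obtain A B where AB: "openin TX A" "openin TX B" "x \<in> A" "y \<in> B" "A \<times> B \<subseteq> W"
      by blast
    define U where "U = \<iota> ` A"
    define V where "V = {e \<in> topspace TE. \<beta> (inv\<^bsub>G\<^esub> r) e \<in> \<iota> ` B}"
    have oU: "openin TE U" unfolding U_def using AB(1) by (rule iota_open)
    have oV: "openin TE V" unfolding V_def by (rule beta_pre_open[OF grp.inv_closed[OF r] iota_open[OF AB(2)]])
    have xU: "\<iota> x \<in> U" unfolding U_def using AB(3) by (rule imageI)
    have yT: "\<iota> y \<in> topspace TE" using y by (rule iota_in)
    have "\<beta> (inv\<^bsub>G\<^esub> r) (\<beta> r (\<iota> y)) \<in> \<iota> ` B"
      unfolding beta_inv[OF r yT] using AB(4) by (rule imageI)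
    moreover have "\<beta> r (\<iota> y) \<in> topspace TE" using beta_in[OF r yT] .
    ultimately have yV: "\<beta> r (\<iota> y) \<in> V" unfolding V_def by simp
    have "\<not> disjnt U V"
    proof
      assume "disjnt U V"
      then show False using nsep oU oV xU yV by blast
    qed
    then obtain e where e: "e \<in> U" "e \<in> V" unfolding disjnt_def by blast
    then obtain x' where x': "x' \<in> A" "e = \<iota> x'" unfolding U_def by blast
    from e(2) obtain y' where y': "y' \<in> B" "\<beta> (inv\<^bsub>G\<^esub> r) e = \<iota> y'" and eT: "e \<in> topspace TE"
      unfolding V_def by blast
    have x'X: "x' \<in> topspace TX" using x'(1) AB(1) openin_subset by blast
    have y'X: "y' \<in> topspace TX" using y'(1) AB(2) openin_subset by blast
    have "\<beta> r (\<iota> y') = \<iota> x'" using y'(2) beta_inv2[OF r eT] x'(2) by simp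
    from key[OF r x'X y'X this] have ky: "y' \<in> D (inv\<^bsub>G\<^esub> r)" "\<sigma> r y' = x'" by auto
    have zS: "(r,y') \<in> S0" unfolding S0_def using ky r by (simp add: Gamma_iff)
    have "P (r,y')" using P zS unfolding eventually_principal by (rule bspec)
    moreover have "fmap (r,y') \<in> W"
    proof -
      have "(x',y') \<in> A \<times> B" using x'(1) y'(1) by (rule SigmaI)
      then have "(x',y') \<in> W" using AB(5) by (rule subsetD[rotated])
      then show ?thesis using ky(2) by simp
    qed
    then have "Q0 (r,y')" using W(3) QQ by metis
    ultimately show False using PQ by blast
  qed
  have evG: "eventually (\<lambda>z. z \<in> S0) F"
    unfolding F_def by (rule filter_leD[OF inf_le1]) (simp add: eventually_principal)
  have lim: "limitin (prod_topology TX TX) fmap (x,y) F"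
    unfolding limitin_def
  proof (intro conjI allI impI)
    show "(x,y) \<in> topspace (prod_topology TX TX)" using x y by simp
  next
    fix U assume "openin (prod_topology TX TX) U \<and> (x,y) \<in> U"
    then have "eventually (\<lambda>z. z \<in> U) (nhdsin (prod_topology TX TX) (x,y))" unfolding eventually_nhdsin by blast
    then have "eventually (\<lambda>z. fmap z \<in> U) (filtercomap fmap (nhdsin (prod_topology TX TX) (x,y)))"
      by (rule eventually_filtercomapI)
    then show "eventually (\<lambda>z. fmap z \<in> U) F"
      unfolding F_def by (rule filter_leD[OF inf_le2])
  qed
  have "eventually (\<lambda>z. z \<in> \<Gamma>) F" using evG by (rule eventually_mono) (simp add: S0_def)
  then have "F \<noteq> bot \<and> eventually (\<lambda>z. z \<in> \<Gamma>) F \<and> (\<exists>p. limitin (prod_topology TX TX) fmap p F)"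
    using Fnb lim by blast
  then obtain F' q where F': "F' \<noteq> bot" "F' \<le> F" "limitin \<Gamma>T (\<lambda>z. z) q F'"
    using H by blast
  obtain q1 q2 where q: "q = (q1,q2)" by (cases q)
  have qG: "q \<in> \<Gamma>" and lq: "limitin (prod_topology TG TX) (\<lambda>z. z) q F'"
    using F'(3) unfolding limitin_subtopology by auto
  have l1: "limitin TG fst q1 F'" and l2: "limitin TX snd q2 F'"
    using lq unfolding limitin_pairwise q by (simp_all add: o_def)
  have "eventually (\<lambda>z. fst z = r) F'"
    using filter_leD[OF F'(2) evG] by (rule eventually_mono) (simp add: S0_def)
  then have l1': "limitin TG fst r F'" using r tsG by (intro limitin_eventually) auto
  have "q1 = r" using limitin_Hausdorff_unique[OF l1 l1' _ hG] F'(1) by simp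
  have limF': "limitin (prod_topology TX TX) fmap (x,y) F'" using lim F'(2) by (rule limitin_mono_filter)
  then have "limitin TX (snd \<circ> fmap) y F'" unfolding limitin_pairwise by simp
  moreover have "snd \<circ> fmap = snd" by (auto simp: fun_eq_iff split: prod.splits)
  ultimately have l2': "limitin TX snd y F'" by simp
  have "q2 = y" using limitin_Hausdorff_unique[OF l2 l2' _ hX] F'(1) by simp
  have "limitin (prod_topology TX TX) (fmap \<circ> (\<lambda>z. z)) (fmap q) F'"
    by (rule continuous_map_limit[OF f_cont F'(3)])
  then have "limitin (prod_topology TX TX) fmap (fmap q) F'" by (simp add: o_def)
  then have "fmap q = (x,y)"
    using limitin_Hausdorff_unique[OF _ limF' _ ] F'(1) hX Hausdorff_space_prod_topology by blast
  then have sx: "\<sigma> r y = x" using q \<open>q1 = r\<close> \<open>q2 = y\<close> by simp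
  have "y \<in> D (inv\<^bsub>G\<^esub> r)" using qG q \<open>q1 = r\<close> \<open>q2 = y\<close> by (simp add: Gamma_iff)
  then have "\<iota> x = \<beta> r (\<iota> y)" using iota_sigma[OF r] sx by metis
  then show False using ne by contradiction
qed


lemma beta_ne: "s \<in> carrier G \<Longrightarrow> e1 \<in> topspace TE \<Longrightarrow> e2 \<in> topspace TE \<Longrightarrow> e1 \<noteq> e2
   \<Longrightarrow> \<beta> s e1 \<noteq> \<beta> s e2"
  by (metis beta_inv)

lemma Hausdorff_TE:
  assumes H: NP
  shows "Hausdorff_space TE"
  unfolding Hausdorff_space_def
proof (intro allI impI)
  fix e1 e2 assume A: "e1 \<in> topspace TE \<and> e2 \<in> topspace TE \<and> e1 \<noteq> e2"
  obtain s x where s: "s \<in> carrier G" and x: "x \<in> topspace TX" and e1: "e1 = \<beta> s (\<iota> x)"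
    using cover_pt A by blast
  obtain s' y where s': "s' \<in> carrier G" and y: "y \<in> topspace TX" and e2: "e2 = \<beta> s' (\<iota> y)"
    using cover_pt A by blast
  define r where "r = inv\<^bsub>G\<^esub> s \<otimes>\<^bsub>G\<^esub> s'"
  have r: "r \<in> carrier G" unfolding r_def using s s' by simp
  have si: "inv\<^bsub>G\<^esub> s \<in> carrier G" using s by simp
  have b1: "\<beta> (inv\<^bsub>G\<^esub> s) e1 = \<iota> x" using e1 beta_inv[OF s iota_in[OF x]] by simp
  have b2: "\<beta> (inv\<^bsub>G\<^esub> s) e2 = \<beta> r (\<iota> y)" unfolding e2 r_def
    using beta_comp[OF si s' iota_in[OF y]] .
  have "\<beta> (inv\<^bsub>G\<^esub> s) e1 \<noteq> \<beta> (inv\<^bsub>G\<^esub> s) e2" using beta_ne[OF si] A by blast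
  then have ne: "\<iota> x \<noteq> \<beta> r (\<iota> y)" using b1 b2 by simp
  obtain U V where UV: "openin TE U" "openin TE V" "\<iota> x \<in> U" "\<beta> r (\<iota> y) \<in> V" "disjnt U V"
    using sep_core[OF H x y r ne] by blast
  define U' where "U' = {e \<in> topspace TE. \<beta> (inv\<^bsub>G\<^esub> s) e \<in> U}"
  define V' where "V' = {e \<in> topspace TE. \<beta> (inv\<^bsub>G\<^esub> s) e \<in> V}"
  have "openin TE U'" unfolding U'_def by (rule beta_pre_open[OF si UV(1)])
  moreover have "openin TE V'" unfolding V'_def by (rule beta_pre_open[OF si UV(2)])
  moreover have "e1 \<in> U'" unfolding U'_def using A b1 UV(3) by simp
  moreover have "e2 \<in> V'" unfolding V'_def using A b2 UV(4) by simp
  moreover have "disjnt U' V'" using UV(5) unfolding U'_def V'_def disjnt_def by blast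
  ultimately show "\<exists>U V. openin TE U \<and> openin TE V \<and> e1 \<in> U \<and> e2 \<in> V \<and> disjnt U V" by blast
qed

lemma LC_TE: "locally_compact_space TE"
  unfolding locally_compact_space_def
proof
  fix e assume e: "e \<in> topspace TE"
  obtain s x where s: "s \<in> carrier G" and x: "x \<in> topspace TX" and ex: "e = \<beta> s (\<iota> x)"
    using cover_pt e by blast
  obtain U0 K0 where UK: "openin TX U0" "compactin TX K0" "x \<in> U0" "U0 \<subseteq> K0"
    using lcX x unfolding locally_compact_space_def by blast
  have "openin TE (\<beta> s ` (\<iota> ` U0))" by (rule beta_image_open[OF s iota_open[OF UK(1)]])
  moreover have "continuous_map TX TE (\<beta> s \<circ> \<iota>)" using iota_cont beta_cont[OF s] by (rule continuous_map_compose)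
  then have "compactin TE ((\<beta> s \<circ> \<iota>) ` K0)" using UK(2) image_compactin by blast
  then have "compactin TE (\<beta> s ` (\<iota> ` K0))" by (simp add: image_comp)
  moreover have "e \<in> \<beta> s ` (\<iota> ` U0)" using ex UK(3) by blast
  moreover have "\<beta> s ` (\<iota> ` U0) \<subseteq> \<beta> s ` (\<iota> ` K0)" using UK(4) by blast
  ultimately show "\<exists>U K. openin TE U \<and> compactin TE K \<and> e \<in> U \<and> U \<subseteq> K" by blast
qed


lemma lmul_cont: "a \<in> carrier G \<Longrightarrow> continuous_map TG TG (\<lambda>u. a \<otimes>\<^bsub>G\<^esub> u)"
proof -
  assume a: "a \<in> carrier G"
  have "continuous_map TG (prod_topology TG TG) (\<lambda>u. (a, u))"
    using a tsG by (intro continuous_map_pairedI) (auto simp: continuous_map_id)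
  from continuous_map_compose[OF this mult_cont] show ?thesis by (simp add: o_def)
qed

lemma rmul_cont: "a \<in> carrier G \<Longrightarrow> continuous_map TG TG (\<lambda>u. u \<otimes>\<^bsub>G\<^esub> a)"
proof -
  assume a: "a \<in> carrier G"
  have "continuous_map TG (prod_topology TG TG) (\<lambda>u. (u, a))"
    using a tsG by (intro continuous_map_pairedI) (auto simp: continuous_map_id)
  from continuous_map_compose[OF this mult_cont] show ?thesis by (simp add: o_def)
qed

lemma LIMK:
  assumes s: "s \<in> carrier G" and L: "limitin TE h c F"
    and ev: "eventually (\<lambda>z. h z \<in> {e \<in> topspace TE. \<beta> (inv\<^bsub>G\<^esub> s) e \<in> \<iota> ` topspace TX}) F"
    and c: "c = \<beta> s (\<iota> x0)" and x0: "x0 \<in> topspace TX"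
  shows "limitin TX (\<lambda>z. gi (\<beta> (inv\<^bsub>G\<^esub> s) (h z))) x0 F"
proof -
  define Ob where "Ob = {e \<in> topspace TE. \<beta> (inv\<^bsub>G\<^esub> s) e \<in> \<iota> ` topspace TX}"
  have si: "inv\<^bsub>G\<^esub> s \<in> carrier G" using s by simp
  have bc: "\<beta> (inv\<^bsub>G\<^esub> s) c = \<iota> x0" unfolding c by (rule beta_inv[OF s iota_in[OF x0]])
  have cOb: "c \<in> Ob" unfolding Ob_def using bc x0 L limitin_topspace by fastforce
  have L2: "limitin (subtopology TE Ob) h c F"
    unfolding limitin_subtopology using cOb ev L unfolding Ob_def by blast
  have c1: "continuous_map (subtopology TE Ob) TE (\<beta> (inv\<^bsub>G\<^esub> s))"
    by (rule continuous_map_from_subtopology[OF beta_cont[OF si]])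
  have "\<beta> (inv\<^bsub>G\<^esub> s) \<in> topspace (subtopology TE Ob) \<rightarrow> \<iota> ` topspace TX"
    unfolding Ob_def by auto
  then have c2: "continuous_map (subtopology TE Ob) (subtopology TE (\<iota> ` topspace TX)) (\<beta> (inv\<^bsub>G\<^esub> s))"
    by (rule continuous_map_into_subtopology[OF c1])
  have c3: "continuous_map (subtopology TE Ob) TX (gi \<circ> \<beta> (inv\<^bsub>G\<^esub> s))"
    by (rule continuous_map_compose[OF c2 gi_cont])
  have "limitin TX ((gi \<circ> \<beta> (inv\<^bsub>G\<^esub> s)) \<circ> h) ((gi \<circ> \<beta> (inv\<^bsub>G\<^esub> s)) c) F"
    by (rule continuous_map_limit[OF c3 L2])
  moreover have "(gi \<circ> \<beta> (inv\<^bsub>G\<^esub> s)) c = x0" using bc gi_iota[OF x0] by simp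
  ultimately show ?thesis by (simp add: o_def)
qed

end

lemma limitin_filtermap_iff: "limitin X f l (filtermap g F) \<longleftrightarrow> limitin X (\<lambda>z. f (g z)) l F"
  unfolding limitin_def by (simp add: eventually_filtermap)

lemma comap_nonbot:
  assumes le: "G \<le> filtermap h F" and nb: "G \<noteq> bot"
  shows "inf F (filtercomap h G) \<noteq> bot"
proof
  assume "inf F (filtercomap h G) = bot"
  then have "eventually (\<lambda>_. False) (inf F (filtercomap h G))" by simp
  then obtain R Q0 where R: "eventually R F" and Q0: "eventually Q0 (filtercomap h G)"
    and RQ0: "\<forall>z. R z \<and> Q0 z \<longrightarrow> False"
    unfolding eventually_inf by blast
  from Q0 obtain Q where Q: "eventually Q G" and QQ: "\<forall>x. Q (h x) \<longrightarrow> Q0 x"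
    unfolding eventually_filtercomap by blast
  have "eventually (\<lambda>y. \<not> Q y) (filtermap h F)"
    unfolding eventually_filtermap using R by (rule eventually_mono) (use RQ0 QQ in blast)
  then have "eventually (\<lambda>y. \<not> Q y) G" using le by (rule filter_leD[rotated])
  with Q have "eventually (\<lambda>_. False) G" by (rule eventually_elim2) blast
  then show False using nb by (simp add: eventually_False)
qed

lemma limitin_comap:
  assumes "limitin X (\<lambda>z. z) q G"
  shows "limitin X h q (inf F (filtercomap h G))"
  unfolding limitin_def
proof (intro conjI allI impI)
  show "q \<in> topspace X" using assms by (rule limitin_topspace)
next
  fix U assume "openin X U \<and> q \<in> U"
  then have "eventually (\<lambda>z. z \<in> U) G" using assms unfolding limitin_def by blast
  then have "eventually (\<lambda>z. h z \<in> U) (filtercomap h G)" by (rule eventually_filtercomapI)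
  then show "eventually (\<lambda>z. h z \<in> U) (inf F (filtercomap h G))" by (rule filter_leD[OF inf_le2])
qed


context pa_env
begin

lemma grp_a: "r \<in> carrier G \<Longrightarrow> t \<in> carrier G \<Longrightarrow> s \<in> carrier G \<Longrightarrow>
   inv\<^bsub>G\<^esub> r \<otimes>\<^bsub>G\<^esub> t \<otimes>\<^bsub>G\<^esub> s \<otimes>\<^bsub>G\<^esub> inv\<^bsub>G\<^esub> s = inv\<^bsub>G\<^esub> r \<otimes>\<^bsub>G\<^esub> t"
  by (simp add: grp.m_assoc)

lemma grp_b: "r \<in> carrier G \<Longrightarrow> t \<in> carrier G \<Longrightarrow> s \<in> carrier G \<Longrightarrow>
   r \<otimes>\<^bsub>G\<^esub> (inv\<^bsub>G\<^esub> r \<otimes>\<^bsub>G\<^esub> t \<otimes>\<^bsub>G\<^esub> s) \<otimes>\<^bsub>G\<^esub> inv\<^bsub>G\<^esub> s = t"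
proof -
  assume r: "r \<in> carrier G" and t: "t \<in> carrier G" and s: "s \<in> carrier G"
  have "r \<otimes>\<^bsub>G\<^esub> (inv\<^bsub>G\<^esub> r \<otimes>\<^bsub>G\<^esub> t \<otimes>\<^bsub>G\<^esub> s) \<otimes>\<^bsub>G\<^esub> inv\<^bsub>G\<^esub> s
      = r \<otimes>\<^bsub>G\<^esub> (inv\<^bsub>G\<^esub> r \<otimes>\<^bsub>G\<^esub> t \<otimes>\<^bsub>G\<^esub> s \<otimes>\<^bsub>G\<^esub> inv\<^bsub>G\<^esub> s)"
    using r t s by (simp add: grp.m_assoc)
  also have "\<dots> = r \<otimes>\<^bsub>G\<^esub> (inv\<^bsub>G\<^esub> r \<otimes>\<^bsub>G\<^esub> t)" using grp_a[OF r t s] by simp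
  also have "\<dots> = t" using r t by (simp add: grp.m_assoc[symmetric])
  finally show ?thesis .
qed


lemma beta_net:
  fixes F :: "('g \<times> 'e) filter"
  assumes H: NP and Fnb: "F \<noteq> bot"
    and ev0: "eventually (\<lambda>z. z \<in> topspace (prod_topology TG TE)) F"
    and L: "limitin (prod_topology TE TE) (\<lambda>(t,y). (\<beta> t y, y)) p F"
  shows "\<exists>F'. F' \<noteq> bot \<and> F' \<le> F \<and> (\<exists>q. limitin (prod_topology TG TE) (\<lambda>z. z) q F')"
proof -
  obtain a b where p: "p = (a,b)" by (cases p)
  have La: "limitin TE (\<lambda>z. \<beta> (fst z) (snd z)) a F" and Lb: "limitin TE snd b F"
    using L unfolding p limitin_pairwise by (simp_all add: o_def case_prod_beta)
  have aT: "a \<in> topspace TE" using La by (rule limitin_topspace)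
  have bT: "b \<in> topspace TE" using Lb by (rule limitin_topspace)
  obtain r y0 where r: "r \<in> carrier G" and y0: "y0 \<in> topspace TX" and ar: "a = \<beta> r (\<iota> y0)"
    using cover_pt[OF aT] by blast
  obtain s x0 where s: "s \<in> carrier G" and x0: "x0 \<in> topspace TX" and bs: "b = \<beta> s (\<iota> x0)"
    using cover_pt[OF bT] by blast
  have ri: "inv\<^bsub>G\<^esub> r \<in> carrier G" using r by simp
  have si: "inv\<^bsub>G\<^esub> s \<in> carrier G" using s by simp
  define Oa where "Oa = {e \<in> topspace TE. \<beta> (inv\<^bsub>G\<^esub> r) e \<in> \<iota> ` topspace TX}"
  define Ob where "Ob = {e \<in> topspace TE. \<beta> (inv\<^bsub>G\<^esub> s) e \<in> \<iota> ` topspace TX}"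
  have oOa: "openin TE Oa" unfolding Oa_def by (rule beta_pre_open[OF ri openIX])
  have oOb: "openin TE Ob" unfolding Ob_def by (rule beta_pre_open[OF si openIX])
  have "\<beta> (inv\<^bsub>G\<^esub> r) a = \<iota> y0" unfolding ar by (rule beta_inv[OF r iota_in[OF y0]])
  then have aOa: "a \<in> Oa" unfolding Oa_def using aT y0 by simp
  have "\<beta> (inv\<^bsub>G\<^esub> s) b = \<iota> x0" unfolding bs by (rule beta_inv[OF s iota_in[OF x0]])
  then have bOb: "b \<in> Ob" unfolding Ob_def using bT x0 by simp
  have ev1: "eventually (\<lambda>z. \<beta> (fst z) (snd z) \<in> Oa) F" by (rule limitinD[OF La oOa aOa])
  have ev2: "eventually (\<lambda>z. snd z \<in> Ob) F" by (rule limitinD[OF Lb oOb bOb])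
  define u where "u = (\<lambda>z::'g \<times> 'e. inv\<^bsub>G\<^esub> r \<otimes>\<^bsub>G\<^esub> fst z \<otimes>\<^bsub>G\<^esub> s)"
  define xp where "xp = (\<lambda>z::'g \<times> 'e. gi (\<beta> (inv\<^bsub>G\<^esub> s) (snd z)))"
  define yp where "yp = (\<lambda>z::'g \<times> 'e. gi (\<beta> (inv\<^bsub>G\<^esub> r) (\<beta> (fst z) (snd z))))"
  define \<psi> where "\<psi> = (\<lambda>z. (u z, xp z))"
  define Good where "Good = (\<lambda>z::'g \<times> 'e. fst z \<in> carrier G \<and> snd z \<in> topspace TE \<and> \<beta> (fst z) (snd z) \<in> Oa \<and> snd z \<in> Ob)"
  have "eventually (\<lambda>z. z \<in> topspace (prod_topology TG TE) \<and> \<beta> (fst z) (snd z) \<in> Oa \<and> snd z \<in> Ob) F"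
    using ev0 ev1 ev2 by (simp add: eventually_conj_iff)
  then have evGood: "eventually Good F"
    by (rule eventually_mono) (auto simp: Good_def tsG mem_Times_iff)
  have good: "\<psi> z \<in> \<Gamma> \<and> fmap (\<psi> z) = (yp z, xp z) \<and> \<beta> s (\<iota> (xp z)) = snd z
      \<and> r \<otimes>\<^bsub>G\<^esub> u z \<otimes>\<^bsub>G\<^esub> inv\<^bsub>G\<^esub> s = fst z" if g: "Good z" for z
  proof -
    obtain t e where z: "z = (t,e)" by (cases z)
    have t: "t \<in> carrier G" and e: "e \<in> topspace TE" and teO: "\<beta> t e \<in> Oa" and eO: "e \<in> Ob"
      using g unfolding Good_def z by auto
    have ex: "\<iota> (xp z) = \<beta> (inv\<^bsub>G\<^esub> s) e \<and> xp z \<in> topspace TX"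
      unfolding xp_def z using iota_gi eO unfolding Ob_def by simp
    have ey: "\<iota> (yp z) = \<beta> (inv\<^bsub>G\<^esub> r) (\<beta> t e) \<and> yp z \<in> topspace TX"
      unfolding yp_def z using iota_gi teO unfolding Oa_def by simp
    have uc: "u z \<in> carrier G" unfolding u_def z using r s t by simp
    have "\<beta> (u z) (\<iota> (xp z)) = \<beta> (u z) (\<beta> (inv\<^bsub>G\<^esub> s) e)" using ex by simp
    also have "\<dots> = \<beta> (u z \<otimes>\<^bsub>G\<^esub> inv\<^bsub>G\<^esub> s) e" by (rule beta_comp[OF uc si e])
    also have "u z \<otimes>\<^bsub>G\<^esub> inv\<^bsub>G\<^esub> s = inv\<^bsub>G\<^esub> r \<otimes>\<^bsub>G\<^esub> t"
      unfolding u_def z using grp_a[OF r t s] by simp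
    also have "\<beta> (inv\<^bsub>G\<^esub> r \<otimes>\<^bsub>G\<^esub> t) e = \<beta> (inv\<^bsub>G\<^esub> r) (\<beta> t e)"
      by (rule beta_comp[OF ri t e, symmetric])
    also have "\<dots> = \<iota> (yp z)" using ey by simp
    finally have "\<beta> (u z) (\<iota> (xp z)) = \<iota> (yp z)" .
    from key[OF uc conjunct2[OF ey] conjunct2[OF ex] this]
    have k: "xp z \<in> D (inv\<^bsub>G\<^esub> (u z))" "\<sigma> (u z) (xp z) = yp z" by auto
    have "\<psi> z \<in> \<Gamma>" unfolding \<psi>_def using k uc by (simp add: Gamma_iff)
    moreover have "fmap (\<psi> z) = (yp z, xp z)" unfolding \<psi>_def using k by simp
    moreover have "\<beta> s (\<iota> (xp z)) = snd z" using ex beta_inv2[OF s e] z by simp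
    moreover have "r \<otimes>\<^bsub>G\<^esub> u z \<otimes>\<^bsub>G\<^esub> inv\<^bsub>G\<^esub> s = fst z"
      unfolding u_def z using grp_b[OF r t s] by simp
    ultimately show ?thesis by blast
  qed
  define F2 where "F2 = filtermap \<psi> F"
  have F2nb: "F2 \<noteq> bot" unfolding F2_def using Fnb by (simp add: filtermap_bot_iff)
  have evF2: "eventually (\<lambda>z. z \<in> \<Gamma>) F2"
    unfolding F2_def eventually_filtermap
  proof (rule eventually_mono[OF evGood])
    fix z assume "Good z"
    then show "\<psi> z \<in> \<Gamma>" using good[of z] by simp
  qed
  have Ly: "limitin TX yp y0 F"
    unfolding yp_def
    by (rule LIMK[OF r La _ ar y0]) (use ev1 in \<open>simp add: Oa_def\<close>)
  have Lx: "limitin TX xp x0 F"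
    unfolding xp_def
    by (rule LIMK[OF s Lb _ bs x0]) (use ev2 in \<open>simp add: Ob_def\<close>)
  have LL: "limitin (prod_topology TX TX) (\<lambda>z. (yp z, xp z)) (y0, x0) F"
    unfolding limitin_pairwise using Ly Lx by (simp add: o_def)
  have EE: "eventually (\<lambda>z. (yp z, xp z) = fmap (\<psi> z)) F"
  proof (rule eventually_mono[OF evGood])
    fix z assume "Good z"
    then show "(yp z, xp z) = fmap (\<psi> z)" using good[of z] by simp
  qed
  have "limitin (prod_topology TX TX) (\<lambda>z. fmap (\<psi> z)) (y0, x0) F"
    by (rule limitin_transform_eventually[OF EE LL])
  then have limF2: "limitin (prod_topology TX TX) fmap (y0, x0) F2"
    unfolding F2_def limitin_filtermap_iff .
  have "F2 \<noteq> bot \<and> eventually (\<lambda>z. z \<in> \<Gamma>) F2 \<and> (\<exists>p. limitin (prod_topology TX TX) fmap p F2)"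
    using F2nb evF2 limF2 by blast
  then have "\<exists>F'. F' \<noteq> bot \<and> F' \<le> F2 \<and> (\<exists>q. limitin \<Gamma>T (\<lambda>z. z) q F')"
    by (rule H[rule_format])
  then obtain F2' q where F2': "F2' \<noteq> bot" "F2' \<le> F2" "limitin \<Gamma>T (\<lambda>z. z) q F2'"
    by blast
  define F' where "F' = inf F (filtercomap \<psi> F2')"
  have F'nb: "F' \<noteq> bot" unfolding F'_def
    by (rule comap_nonbot) (use F2' in \<open>simp_all add: F2_def\<close>)
  have F'le: "F' \<le> F" unfolding F'_def by simp
  have "limitin \<Gamma>T \<psi> q F'" unfolding F'_def by (rule limitin_comap[OF F2'(3)])
  then have Lpsi: "limitin (prod_topology TG TX) \<psi> q F'" unfolding limitin_subtopology by blast
  obtain q1 q2 where q: "q = (q1,q2)" by (cases q)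
  have Lu: "limitin TG u q1 F'" and Lxp: "limitin TX xp q2 F'"
    using Lpsi unfolding limitin_pairwise q \<psi>_def by (simp_all add: o_def)
  have evGood': "eventually Good F'" using F'le evGood by (rule filter_leD)
  have mc: "continuous_map TG TG ((\<lambda>v. v \<otimes>\<^bsub>G\<^esub> inv\<^bsub>G\<^esub> s) \<circ> (\<lambda>v. r \<otimes>\<^bsub>G\<^esub> v))"
    by (rule continuous_map_compose[OF lmul_cont[OF r] rmul_cont[OF si]])
  have "limitin TG (((\<lambda>v. v \<otimes>\<^bsub>G\<^esub> inv\<^bsub>G\<^esub> s) \<circ> (\<lambda>v. r \<otimes>\<^bsub>G\<^esub> v)) \<circ> u)
          (((\<lambda>v. v \<otimes>\<^bsub>G\<^esub> inv\<^bsub>G\<^esub> s) \<circ> (\<lambda>v. r \<otimes>\<^bsub>G\<^esub> v)) q1) F'"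
    by (rule continuous_map_limit[OF mc Lu])
  moreover have "eventually (\<lambda>z. (((\<lambda>v. v \<otimes>\<^bsub>G\<^esub> inv\<^bsub>G\<^esub> s) \<circ> (\<lambda>v. r \<otimes>\<^bsub>G\<^esub> v)) \<circ> u) z = fst z) F'"
  proof (rule eventually_mono[OF evGood'])
    fix z assume "Good z"
    then show "(((\<lambda>v. v \<otimes>\<^bsub>G\<^esub> inv\<^bsub>G\<^esub> s) \<circ> (\<lambda>v. r \<otimes>\<^bsub>G\<^esub> v)) \<circ> u) z = fst z"
      using good[of z] by simp
  qed
  ultimately have L1: "limitin TG fst (((\<lambda>v. v \<otimes>\<^bsub>G\<^esub> inv\<^bsub>G\<^esub> s) \<circ> (\<lambda>v. r \<otimes>\<^bsub>G\<^esub> v)) q1) F'"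
    by (rule limitin_transform_eventually[rotated])
  have bc: "continuous_map TX TE (\<beta> s \<circ> \<iota>)" by (rule continuous_map_compose[OF iota_cont beta_cont[OF s]])
  have "limitin TE ((\<beta> s \<circ> \<iota>) \<circ> xp) ((\<beta> s \<circ> \<iota>) q2) F'"
    by (rule continuous_map_limit[OF bc Lxp])
  moreover have "eventually (\<lambda>z. ((\<beta> s \<circ> \<iota>) \<circ> xp) z = snd z) F'"
  proof (rule eventually_mono[OF evGood'])
    fix z assume "Good z"
    then show "((\<beta> s \<circ> \<iota>) \<circ> xp) z = snd z" using good[of z] by simp
  qed
  ultimately have L2: "limitin TE snd ((\<beta> s \<circ> \<iota>) q2) F'"
    by (rule limitin_transform_eventually[rotated])
  have "limitin (prod_topology TG TE) (\<lambda>z. z)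
          (((\<lambda>v. v \<otimes>\<^bsub>G\<^esub> inv\<^bsub>G\<^esub> s) \<circ> (\<lambda>v. r \<otimes>\<^bsub>G\<^esub> v)) q1, (\<beta> s \<circ> \<iota>) q2) F'"
    unfolding limitin_pairwise using L1 L2 by (simp add: o_def)
  then show ?thesis using F'nb F'le by blast
qed


lemma proper_TE:
  assumes H: NP
  shows "proper_action G TG TE \<beta>"
  unfolding proper_action_def
proof (rule netprop_imp_proper)
  show "Hausdorff_space (prod_topology TE TE)"
    using Hausdorff_TE[OF H] Hausdorff_space_prod_topology by blast
next
  have "continuous_map (prod_topology TG TE) (prod_topology TE TE) (\<lambda>z. ((\<lambda>(t,y). \<beta> t y) z, snd z))"
    by (intro continuous_map_pairedI beta_jcont continuous_map_snd)
  then show "continuous_map (prod_topology TG TE) (prod_topology TE TE) (\<lambda>(t,y). (\<beta> t y, y))"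
    by (simp add: case_prod_beta')
next
  fix F :: "('g \<times> 'e) filter"
  assume "F \<noteq> bot" "eventually (\<lambda>z. z \<in> topspace (prod_topology TG TE)) F"
    "\<exists>p. limitin (prod_topology TE TE) (\<lambda>(t,y). (\<beta> t y, y)) p F"
  then show "\<exists>F'. F' \<noteq> bot \<and> F' \<le> F \<and> (\<exists>q. limitin (prod_topology TG TE) (\<lambda>z. z) q F')"
    using beta_net[OF H] by blast
qed

lemma main:
  "((locally_compact_space TE \<and> Hausdorff_space TE \<and> proper_action G TG TE \<beta>) \<longleftrightarrow> NP)
   \<and> (NP \<longleftrightarrow> compact_preimage_map \<Gamma>T (prod_topology TX TX) fmap)"
proof -
  have 1: "(locally_compact_space TE \<and> Hausdorff_space TE \<and> proper_action G TG TE \<beta>) \<longleftrightarrow> NP"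
  proof
    assume "locally_compact_space TE \<and> Hausdorff_space TE \<and> proper_action G TG TE \<beta>"
    then have "compact_preimage_map \<Gamma>T (prod_topology TX TX) fmap" using T13 by blast
    then show NP using T23 by blast
  next
    assume H: NP
    show "locally_compact_space TE \<and> Hausdorff_space TE \<and> proper_action G TG TE \<beta>"
      using LC_TE Hausdorff_TE[OF H] proper_TE[OF H] by blast
  qed
  show ?thesis using 1 T23 by blast
qed

end

theorem proposition1p10:
  fixes G :: "('g,'b) monoid_scheme" and TG :: "'g topology"
    and TX :: "'x topology" and D :: "'g \<Rightarrow> 'x set" and \<sigma> :: "'g \<Rightarrow> 'x \<Rightarrow> 'x"
    and TE :: "'e topology" and \<beta> :: "'g \<Rightarrow> 'e \<Rightarrow> 'e" and \<iota> :: "'x \<Rightarrow> 'e"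
  assumes "topological_group G TG" and "locally_compact_space TG" and "Hausdorff_space TG"
    and "locally_compact_space TX" and "Hausdorff_space TX"
    and "partial_action G TG TX D \<sigma>"
    and "enveloping_action G TG TX D \<sigma> TE \<beta> \<iota>"
  shows "((locally_compact_space TE \<and> Hausdorff_space TE \<and> proper_action G TG TE \<beta>)
           \<longleftrightarrow>
          (\<forall>F :: ('g \<times> 'x) filter.
             F \<noteq> bot \<and> eventually (\<lambda>z. z \<in> Gamma_pa G D) F \<and>
             (\<exists>p. limitin (prod_topology TX TX) (\<lambda>(t,x). (\<sigma> t x, x)) p F)
             \<longrightarrow> (\<exists>F'. F' \<noteq> bot \<and> F' \<le> F \<and>
                   (\<exists>q. limitin (subtopology (prod_topology TG TX) (Gamma_pa G D)) (\<lambda>z. z) q F'))))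
       \<and>
         ((\<forall>F :: ('g \<times> 'x) filter.
             F \<noteq> bot \<and> eventually (\<lambda>z. z \<in> Gamma_pa G D) F \<and>
             (\<exists>p. limitin (prod_topology TX TX) (\<lambda>(t,x). (\<sigma> t x, x)) p F)
             \<longrightarrow> (\<exists>F'. F' \<noteq> bot \<and> F' \<le> F \<and>
                   (\<exists>q. limitin (subtopology (prod_topology TG TX) (Gamma_pa G D)) (\<lambda>z. z) q F')))
           \<longleftrightarrow>
          compact_preimage_map (subtopology (prod_topology TG TX) (Gamma_pa G D))
            (prod_topology TX TX) (\<lambda>(t,x). (\<sigma> t x, x)))"
proof -
  interpret pa_env G TG TX D \<sigma> TE \<beta> \<iota>
    by (unfold_locales) (use assms in auto)
  show ?thesis by (rule main)
qed

end
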